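(* Let $k\ge 2$, $w=2^k-1$, $v=2^{k-1}$. Consider a line of $w$ cells indexed $0,\dots,w-1$, all empty except the middle cell $v-1$, on which the frog stands. For $j\ge1$ let $\tilde U_j$ be the sequence of jump lengths consisting of $2^j-1$ jumps of length $1$ followed by one jump of length $2^j+2^{j-1}-1$. Consider the fixed sequence $\tilde U_{k-1},\tilde U_{k-2},\dots,\tilde U_2,\tilde U_1$. Then every valid execution of this sequence visits every cell of the line exactly once and ends on a cell with even index, and for every even index $p\in\{0,2,\dots,w-1\}$ there is a valid execution ending on cell $p$.
   Context: A frog on a line of cells performs a given sequence of positive jump lengths; for each jump it chooses a direction, moving from position $q$ to $q+J$ or $q-J$. An execution is valid if every landing cell lies on the line, is not blocked, and has not been visited before (the starting cell counts as visited). Cells are indexed from $0$. *)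

theory Defs
  imports Main
begin

fun frog_path :: "int \<Rightarrow> nat list \<Rightarrow> bool list \<Rightarrow> int list" where
  "frog_path q [] ds = [q]"
| "frog_path q (J # Js) [] = [q]"
| "frog_path q (J # Js) (d # ds) =
     q # frog_path (if d then q + int J else q - int J) Js ds"

definition valid_exec :: "nat \<Rightarrow> int set \<Rightarrow> int \<Rightarrow> nat list \<Rightarrow> bool list \<Rightarrow> bool" where
  "valid_exec w B s Js ds \<longleftrightarrow>
     length ds = length Js \<and>
     (\<forall>p \<in> set (tl (frog_path s Js ds)). 0 \<le> p \<and> p < int w \<and> p \<notin> B) \<and>
     distinct (frog_path s Js ds)"

definition Ublock :: "nat \<Rightarrow> nat list" where
  "Ublock j = replicate (2 ^ j - 1) 1 @ [2 ^ j + 2 ^ (j - 1) - 1]"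

definition frog_seq :: "nat \<Rightarrow> nat list" where
  "frog_seq k = concat (map Ublock (rev [1..<k]))"

end

theory Submission
  imports Defs
begin

fun run :: "int set \<Rightarrow> int \<Rightarrow> nat list \<Rightarrow> bool list \<Rightarrow> (int set \<times> int) option" where
  "run W q [] [] = Some (W, q)"
| "run W q [] (d#ds) = None"
| "run W q (J#Js) [] = None"
| "run W q (J#Js) (d#ds) = (let q' = if d then q + int J else q - int J in
      if q' \<in> W then run (W - {q'}) q' Js ds else None)"

lemma fp_hd: "frog_path q Js ds = q # tl (frog_path q Js ds)"
  by (cases "(q,Js,ds)" rule: frog_path.cases) auto

lemma run_len: "run W q A ds = Some x \<Longrightarrow> length ds = length A"
  by (induction W q A ds rule: run.induct) (auto simp: Let_def split: if_splits)

lemma run_link: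
  "q \<notin> W \<Longrightarrow> (run W q Js ds \<noteq> None) \<longleftrightarrow>
     (length ds = length Js \<and> set (tl (frog_path q Js ds)) \<subseteq> W \<and> distinct (frog_path q Js ds))"
proof (induction W q Js ds rule: run.induct)
  case (4 W q J Js d ds)
  define q' where "q' = (if d then q + int J else q - int J)"
  obtain t where e: "frog_path q' Js ds = q' # t" using fp_hd by blast
  show ?case
  proof (cases "q' \<in> W")
    case True
    have "q' \<notin> W - {q'}" by simp
    from "4.IH"[OF _ _ this, folded q'_def] True
    have IH: "(run (W - {q'}) q' Js ds \<noteq> None) =
      (length ds = length Js \<and> set (tl (frog_path q' Js ds)) \<subseteq> W - {q'} \<and> distinct (frog_path q' Js ds))"
      by (simp add: q'_def)
    show ?thesis using True IH "4.prems" e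
      by (auto simp: Let_def q'_def[symmetric])
  next
    case False
    show ?thesis using False e
      by (simp add: Let_def q'_def[symmetric])
  qed
qed auto

lemma run_set:
  "run W q Js ds = Some (W', q') \<Longrightarrow> q \<notin> W \<Longrightarrow>
    set (frog_path q Js ds) = insert q (W - W') \<and> last (frog_path q Js ds) = q' \<and> W' \<subseteq> W"
proof (induction W q Js ds rule: run.induct)
  case (4 W q J Js d ds)
  define r where "r = (if d then q + int J else q - int J)"
  obtain t where e: "frog_path r Js ds = r # t" using fp_hd by blast
  from "4.prems" have rW: "r \<in> W" and R: "run (W - {r}) r Js ds = Some (W', q')"
    by (auto simp: Let_def r_def[symmetric] split: if_splits)
  from "4.IH"[OF _ _ _ _, folded r_def] rW R
  have IH: "set (frog_path r Js ds) = insert r (W - {r} - W') \<and> last (frog_path r Js ds) = q' \<and> W' \<subseteq> W - {r}"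
    by (simp add: r_def)
  show ?case using IH rW "4.prems"(2) e
    by (auto simp: r_def[symmetric])
qed auto

lemma run_append_Some:
  "run W q A ds1 = Some (W1, q1) \<Longrightarrow> run W q (A @ B) (ds1 @ ds2) = run W1 q1 B ds2"
  by (induction W q A ds1 rule: run.induct) (auto simp: Let_def split: if_splits)

lemma run_append_split:
  "run W q (A @ B) ds = Some x \<Longrightarrow>
    \<exists>ds1 ds2 W1 q1. ds = ds1 @ ds2 \<and> run W q A ds1 = Some (W1, q1) \<and> run W1 q1 B ds2 = Some x"
proof (induction A arbitrary: W q ds)
  case Nil
  then show ?case by (intro exI[of _ "[]"] exI[of _ ds]) auto
next
  case (Cons J A)
  then obtain d ds' where ds: "ds = d # ds'" by (cases ds) auto
  define r where "r = (if d then q + int J else q - int J)"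
  from Cons.prems ds have rW: "r \<in> W" and R: "run (W - {r}) r (A @ B) ds' = Some x"
    by (auto simp: Let_def r_def[symmetric] split: if_splits)
  from Cons.IH[OF R] obtain ds1 ds2 W1 q1 where
    "ds' = ds1 @ ds2" "run (W - {r}) r A ds1 = Some (W1, q1)" "run W1 q1 B ds2 = Some x" by blast
  then show ?case using rW ds
    by (intro exI[of _ "d # ds1"] exI[of _ ds2] exI[of _ W1] exI[of _ q1])
       (simp add: Let_def r_def[symmetric])
qed

lemma walkR_unique:
  "c \<notin> W \<Longrightarrow> c - 1 \<notin> W \<Longrightarrow> run W c (replicate m 1) ds = Some (W', q) \<Longrightarrow>
    ds = replicate m True \<and> {c+1..c+int m} \<subseteq> W \<and> W' = W - {c+1..c+int m} \<and> q = c + int m"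
proof (induction m arbitrary: c W ds)
  case 0
  then show ?case by (cases ds) auto
next
  case (Suc m)
  then obtain d ds' where ds: "ds = d # ds'" by (cases ds) auto
  show ?case
  proof (cases d)
    case False
    then show ?thesis using Suc.prems ds by (simp add: Let_def)
  next
    case True
    with Suc.prems ds have cW: "c + 1 \<in> W" and R: "run (W - {c+1}) (c+1) (replicate m 1) ds' = Some (W', q)"
      by (auto simp: Let_def split: if_splits)
    have "c + 1 \<notin> W - {c+1}" "c + 1 - 1 \<notin> W - {c+1}" using Suc.prems by auto
    from Suc.IH[OF this R] have
      "ds' = replicate m True" "{c+1+1..c+1+int m} \<subseteq> W - {c+1}" "W' = W - {c+1} - {c+1+1..c+1+int m}"
      "q = c + 1 + int m" by auto
    moreover have "{c+1..c+int (Suc m)} = insert (c+1) {c+1+1..c+1+int m}" by auto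
    ultimately show ?thesis using ds True cW by auto
  qed
qed

lemma walkL_unique:
  "c \<notin> W \<Longrightarrow> c + 1 \<notin> W \<Longrightarrow> run W c (replicate m 1) ds = Some (W', q) \<Longrightarrow>
    ds = replicate m False \<and> {c-int m..c-1} \<subseteq> W \<and> W' = W - {c-int m..c-1} \<and> q = c - int m"
proof (induction m arbitrary: c W ds)
  case 0
  then show ?case by (cases ds) auto
next
  case (Suc m)
  then obtain d ds' where ds: "ds = d # ds'" by (cases ds) auto
  show ?case
  proof (cases d)
    case True
    then show ?thesis using Suc.prems ds by (simp add: Let_def)
  next
    case False
    with Suc.prems ds have cW: "c - 1 \<in> W" and R: "run (W - {c-1}) (c-1) (replicate m 1) ds' = Some (W', q)"
      by (auto simp: Let_def split: if_splits)
    have "c - 1 \<notin> W - {c-1}" "c - 1 + 1 \<notin> W - {c-1}" using Suc.prems by auto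
    from Suc.IH[OF this R] have
      "ds' = replicate m False" "{c-1-int m..c-1-1} \<subseteq> W - {c-1}" "W' = W - {c-1} - {c-1-int m..c-1-1}"
      "q = c - 1 - int m" by auto
    moreover have "{c-int (Suc m)..c-1} = insert (c-1) {c-1-int m..c-1-1}" by auto
    ultimately show ?thesis using ds False cW by auto
  qed
qed

lemma walkR_ex:
  "{c+1..c+int m} \<subseteq> W \<Longrightarrow> run W c (replicate m 1) (replicate m True) = Some (W - {c+1..c+int m}, c + int m)"
proof (induction m arbitrary: c W)
  case 0 then show ?case by simp
next
  case (Suc m)
  have "{c+1+1..c+1+int m} \<subseteq> W - {c+1}" using Suc.prems by auto
  from Suc.IH[OF this] have "run (W - {c+1}) (c+1) (replicate m 1) (replicate m True)
     = Some (W - {c+1} - {c+1+1..c+1+int m}, c+1+int m)" .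
  moreover have "W - {c+1} - {c+1+1..c+1+int m} = W - {c+1..c+int (Suc m)}" by auto
  moreover have "c + 1 \<in> W" using Suc.prems by auto
  ultimately show ?case by (simp add: Let_def add.assoc)
qed

lemma walkL_ex:
  "{c-int m..c-1} \<subseteq> W \<Longrightarrow> run W c (replicate m 1) (replicate m False) = Some (W - {c-int m..c-1}, c - int m)"
proof (induction m arbitrary: c W)
  case 0 then show ?case by simp
next
  case (Suc m)
  have "{c-1-int m..c-1-1} \<subseteq> W - {c-1}" using Suc.prems by auto
  from Suc.IH[OF this] have "run (W - {c-1}) (c-1) (replicate m 1) (replicate m False)
     = Some (W - {c-1} - {c-1-int m..c-1-1}, c-1-int m)" .
  moreover have "W - {c-1} - {c-1-int m..c-1-1} = W - {c-int (Suc m)..c-1}" by auto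
  moreover have "c - 1 \<in> W" using Suc.prems by auto
  ultimately show ?case by (simp add: Let_def algebra_simps)
qed

lemma run_single:
  "run W q [J] ds = Some (W', q') \<longleftrightarrow>
    (\<exists>e. ds = [e] \<and> q' = (if e then q + int J else q - int J) \<and> q' \<in> W \<and> W' = W - {q'})"
  apply (cases ds)
   apply simp
  subgoal for e es by (cases es) (auto simp: Let_def)
  done

lemma block_A:
  fixes h :: nat and a :: int
  assumes h: "h \<ge> 1"
    and R: "run ({a..a+4*int h-2} - {a+2*int h-1}) (a+2*int h-1)
              (1 # replicate (2*h-2) 1 @ [3*h-1]) ds = Some (W', q)"
  shows "(W' = {a..a+2*int h-2} - {a+int h-1} \<and> q = a+int h-1) \<or>
         (W' = {a+2*int h..a+4*int h-2} - {a+3*int h-1} \<and> q = a+3*int h-1)"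
proof -
  define H where "H = int h"
  define W where "W = {a..a+4*H-2} - {a+2*H-1}"
  define c where "c = a + 2*H - 1"
  have mH: "int (2*h-2) = 2*H-2" and LH: "int (3*h-1) = 3*H-1" using h by (auto simp: H_def)
  have H1: "H \<ge> 1" using h by (simp add: H_def)
  from R obtain d ds' where ds: "ds = d # ds'" by (cases ds) auto
  show ?thesis
  proof (cases d)
    case True
    from R ds True have cW: "c + 1 \<in> W" and R2:
      "run (W - {c+1}) (c+1) (replicate (2*h-2) 1 @ [3*h-1]) ds' = Some (W', q)"
      by (auto simp: Let_def W_def c_def H_def split: if_splits)
    from run_append_split[OF R2] obtain ds1 ds2 W1 q1 where
      A: "run (W - {c+1}) (c+1) (replicate (2*h-2) 1) ds1 = Some (W1, q1)"
      and B: "run W1 q1 [3*h-1] ds2 = Some (W', q)" by blast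
    have "c + 1 \<notin> W - {c+1}" "c + 1 - 1 \<notin> W - {c+1}" by (auto simp: W_def c_def)
    from walkR_unique[OF this A] mH have
      W1: "W1 = W - {c+1} - {c+1+1..c+1+(2*H-2)}" and q1: "q1 = c+1+(2*H-2)" by auto
    have W1': "W1 = {a..a+2*H-2}" using W1 H1 by (auto simp: W_def c_def)
    from B obtain e where e: "q = (if e then q1 + (3*H-1) else q1 - (3*H-1))" "q \<in> W1" "W' = W1 - {q}"
      unfolding run_single LH by auto
    have "q = a + H - 1" using e q1 W1' H1 by (auto simp: c_def split: if_splits)
    then show ?thesis using e W1' by (simp add: H_def)
  next
    case False
    from R ds False have cW: "c - 1 \<in> W" and R2:
      "run (W - {c-1}) (c-1) (replicate (2*h-2) 1 @ [3*h-1]) ds' = Some (W', q)"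
      by (auto simp: Let_def W_def c_def H_def split: if_splits)
    from run_append_split[OF R2] obtain ds1 ds2 W1 q1 where
      A: "run (W - {c-1}) (c-1) (replicate (2*h-2) 1) ds1 = Some (W1, q1)"
      and B: "run W1 q1 [3*h-1] ds2 = Some (W', q)" by blast
    have "c - 1 \<notin> W - {c-1}" "c - 1 + 1 \<notin> W - {c-1}" by (auto simp: W_def c_def)
    from walkL_unique[OF this A] mH have
      W1: "W1 = W - {c-1} - {c-1-(2*H-2)..c-1-1}" and q1: "q1 = c-1-(2*H-2)" by auto
    have W1': "W1 = {a+2*H..a+4*H-2}" using W1 H1 by (auto simp: W_def c_def)
    from B obtain e where e: "q = (if e then q1 + (3*H-1) else q1 - (3*H-1))" "q \<in> W1" "W' = W1 - {q}"
      unfolding run_single LH by auto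
    have "q = a + 3*H - 1" using e q1 W1' H1 by (auto simp: c_def split: if_splits)
    then show ?thesis using e W1' by (simp add: H_def)
  qed
qed

lemma block_B:
  fixes h :: nat and a a' :: int
  assumes h: "h \<ge> 1" and a': "a' = a \<or> a' = a + 2*int h"
  shows "\<exists>ds. run ({a..a+4*int h-2} - {a+2*int h-1}) (a+2*int h-1)
              (1 # replicate (2*h-2) 1 @ [3*h-1]) ds = Some ({a'..a'+2*int h-2} - {a'+int h-1}, a'+int h-1)"
proof -
  define H where "H = int h"
  define W where "W = {a..a+4*H-2} - {a+2*H-1}"
  define c where "c = a + 2*H - 1"
  have mH: "int (2*h-2) = 2*H-2" and LH: "int (3*h-1) = 3*H-1" using h by (auto simp: H_def)
  have H1: "H \<ge> 1" using h by (simp add: H_def)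
  from a' show ?thesis
  proof
    assume a'a: "a' = a"
    have cW: "c + 1 \<in> W" using H1 by (auto simp: W_def c_def)
    have "{c+1+1..c+1+int (2*h-2)} \<subseteq> W - {c+1}" using mH H1 by (auto simp: W_def c_def)
    from walkR_ex[OF this] have A: "run (W - {c+1}) (c+1) (replicate (2*h-2) 1) (replicate (2*h-2) True)
       = Some ({a..a+2*H-2}, a+4*H-2)"
    proof -
      assume "run (W - {c+1}) (c+1) (replicate (2*h-2) 1) (replicate (2*h-2) True)
        = Some (W - {c+1} - {c+1+1..c+1+int (2*h-2)}, c+1+int (2*h-2))"
      moreover have "W - {c+1} - {c+1+1..c+1+int (2*h-2)} = {a..a+2*H-2}" using mH H1
        by (auto simp: W_def c_def)
      moreover have "c+1+int (2*h-2) = a+4*H-2" using mH by (simp add: c_def)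
      ultimately show ?thesis by simp
    qed
    have B: "run {a..a+2*H-2} (a+4*H-2) [3*h-1] [False] = Some ({a..a+2*H-2} - {a+H-1}, a+H-1)"
      unfolding run_single LH using H1 by auto
    have "run W c (1 # replicate (2*h-2) 1 @ [3*h-1]) (True # replicate (2*h-2) True @ [False])
        = Some ({a..a+2*H-2} - {a+H-1}, a+H-1)"
      using cW run_append_Some[OF A, of "[3*h-1]" "[False]"] B by (simp add: Let_def)
    then show ?thesis unfolding a'a W_def c_def H_def by blast
  next
    assume a'a: "a' = a + 2*int h"
    have cW: "c - 1 \<in> W" using H1 by (auto simp: W_def c_def)
    have "{c-1-int (2*h-2)..c-1-1} \<subseteq> W - {c-1}" using mH H1 by (auto simp: W_def c_def)
    from walkL_ex[OF this] have A: "run (W - {c-1}) (c-1) (replicate (2*h-2) 1) (replicate (2*h-2) False)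
       = Some ({a+2*H..a+4*H-2}, a)"
    proof -
      assume "run (W - {c-1}) (c-1) (replicate (2*h-2) 1) (replicate (2*h-2) False)
        = Some (W - {c-1} - {c-1-int (2*h-2)..c-1-1}, c-1-int (2*h-2))"
      moreover have "W - {c-1} - {c-1-int (2*h-2)..c-1-1} = {a+2*H..a+4*H-2}" using mH H1
        by (auto simp: W_def c_def)
      moreover have "c-1-int (2*h-2) = a" using mH by (simp add: c_def)
      ultimately show ?thesis by simp
    qed
    have B: "run {a+2*H..a+4*H-2} a [3*h-1] [True] = Some ({a+2*H..a+4*H-2} - {a+3*H-1}, a+3*H-1)"
      unfolding run_single LH using H1 by auto
    have "run W c (1 # replicate (2*h-2) 1 @ [3*h-1]) (False # replicate (2*h-2) False @ [True])
        = Some ({a+2*H..a+4*H-2} - {a+3*H-1}, a+3*H-1)"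
      using cW run_append_Some[OF A, of "[3*h-1]" "[True]"] B by (simp add: Let_def)
    moreover have "a + 2*H + 2*H - 2 = a+4*H-2" "a + 2*H + H - 1 = a+3*H-1" by simp_all
    ultimately show ?thesis unfolding a'a W_def c_def H_def by metis
  qed
qed

lemma Ublock_Suc: "Ublock (Suc i) = 1 # replicate (2*2^i-2) 1 @ [3*2^i-1]"
proof -
  have "(1::nat) \<le> 2^i" by simp
  then have "(2::nat)^Suc i - 1 = Suc (2*2^i-2)" by (simp; linarith)
  moreover have "(2::nat)^Suc i + 2^(Suc i - 1) - 1 = 3*2^i-1" by simp
  ultimately show ?thesis unfolding Ublock_def by simp
qed

definition S :: "nat \<Rightarrow> nat list" where "S j = concat (map Ublock (rev [1..<Suc j]))"

lemma S_Suc: "S (Suc j) = Ublock (Suc j) @ S j"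
  by (simp add: S_def)

lemma full:
  "(\<forall>ds W' q. run ({a..a+2*2^j-2} - {a+2^j-1}) (a+2^j-1) (S j) ds = Some (W', q) \<longrightarrow> W' = {} \<and> even (q - a))
   \<and> (\<forall>p. a \<le> p \<and> p \<le> a+2*2^j-2 \<and> even (p - a) \<longrightarrow>
        (\<exists>ds. run ({a..a+2*2^j-2} - {a+2^j-1}) (a+2^j-1) (S j) ds = Some ({}, p)))"
proof (induction j arbitrary: a)
  case 0
  have S0: "S 0 = []" by (simp add: S_def)
  have rn: "\<And>W q ds x. run W q [] ds = Some x \<longleftrightarrow> ds = [] \<and> x = (W, q)"
    subgoal for W q ds x by (cases ds) auto done
  show ?case unfolding S0 rn by auto
next
  case (Suc j)
  define h :: nat where "h = 2^j"
  have h1: "h \<ge> 1" by (simp add: h_def)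
  have hh: "(2::int)^j = int h" by (simp add: h_def)
  have e1: "a + 2*2^Suc j - 2 = a + 4*int h - 2" "a + 2^Suc j - 1 = a + 2*int h - 1" by (simp_all add: hh)
  have U: "Ublock (Suc j) = 1 # replicate (2*h-2) 1 @ [3*h-1]" by (simp add: h_def Ublock_Suc)
  show ?case
  proof (rule conjI; intro allI impI)
    fix ds W' q assume R: "run ({a..a+2*2^Suc j-2} - {a+2^Suc j-1}) (a+2^Suc j-1) (S (Suc j)) ds = Some (W', q)"
    from run_append_split[OF R[unfolded S_Suc]] obtain ds1 ds2 W1 q1 where
      A: "run ({a..a+2*2^Suc j-2} - {a+2^Suc j-1}) (a+2^Suc j-1) (Ublock (Suc j)) ds1 = Some (W1, q1)"
      and B: "run W1 q1 (S j) ds2 = Some (W', q)" by blast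
    from block_A[OF h1 A[unfolded e1 U]]
    have "\<exists>a'. (a' = a \<or> a' = a + 2*int h) \<and> W1 = {a'..a'+2*2^j-2} - {a'+2^j-1} \<and> q1 = a'+2^j-1"
    proof (elim disjE)
      assume "W1 = {a..a + 2 * int h - 2} - {a + int h - 1} \<and> q1 = a + int h - 1"
      then show ?thesis by (intro exI[of _ a]) (simp add: hh)
    next
      assume "W1 = {a + 2 * int h..a + 4 * int h - 2} - {a + 3 * int h - 1} \<and> q1 = a + 3 * int h - 1"
      moreover have "a + 2*int h + 2*int h - 2 = a+4*int h-2" "a+2*int h + int h - 1 = a+3*int h-1" by simp_all
      ultimately show ?thesis by (intro exI[of _ "a + 2*int h"]) (simp add: hh algebra_simps)
    qed
    then obtain a' where
      a': "a' = a \<or> a' = a + 2*int h" and W1: "W1 = {a'..a'+2*2^j-2} - {a'+2^j-1}" and q1: "q1 = a'+2^j-1"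
      by blast
    from Suc.IH[of a'] B W1 q1 have "W' = {} \<and> even (q - a')" by blast
    then show "W' = {} \<and> even (q - a)" using a' by (auto simp: h_def)
  next
    fix p :: int assume p: "a \<le> p \<and> p \<le> a+2*2^Suc j-2 \<and> even (p - a)"
    define a' where "a' = (if p \<le> a + 2*int h - 2 then a else a + 2*int h)"
    have a': "a' = a \<or> a' = a + 2*int h" by (simp add: a'_def)
    from p have "even (p - a)" by simp
    then obtain t where t: "p - a = 2*t" by (rule evenE)
    have p': "a' \<le> p \<and> p \<le> a'+2*2^j-2 \<and> even (p - a')"
    proof (cases "p \<le> a + 2*int h - 2")
      case True then show ?thesis using p by (simp add: a'_def hh)
    next
      case False
      then have th: "t \<ge> int h" using t by presburger
      have pl: "p \<le> a + 4*int h - 2" using p by (simp add: hh)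
      have "p - (a + 2*int h) = 2*(t - int h)" using t by simp
      then have ev: "even (p - (a + 2*int h))" by (metis dvd_triv_left)
      have "a + 2*int h \<le> p" using t th by linarith
      then show ?thesis using pl False ev unfolding a'_def hh by simp
    qed
    from Suc.IH[of a'] p' obtain ds2 where B: "run ({a'..a'+2*2^j-2} - {a'+2^j-1}) (a'+2^j-1) (S j) ds2 = Some ({}, p)"
      by blast
    from block_B[OF h1 a'] obtain ds1 where A: "run ({a..a+4*int h-2} - {a+2*int h-1}) (a+2*int h-1)
              (1 # replicate (2*h-2) 1 @ [3*h-1]) ds1 = Some ({a'..a'+2*int h-2} - {a'+int h-1}, a'+int h-1)"
      by blast
    have "run ({a..a+2*2^Suc j-2} - {a+2^Suc j-1}) (a+2^Suc j-1) (S (Suc j)) (ds1 @ ds2) = Some ({}, p)"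
      unfolding S_Suc e1 U using run_append_Some[OF A] B by (simp add: hh)
    then show "\<exists>ds. run ({a..a+2*2^Suc j-2} - {a+2^Suc j-1}) (a+2^Suc j-1) (S (Suc j)) ds = Some ({}, p)" by blast
  qed
qed

theorem mainTheorem7:
  fixes k w v :: nat
  assumes "k \<ge> 2" and "w = 2 ^ k - 1" and "v = 2 ^ (k - 1)"
  shows "(\<forall>ds. valid_exec w {} (int v - 1) (frog_seq k) ds \<longrightarrow>
            distinct (frog_path (int v - 1) (frog_seq k) ds) \<and>
            set (frog_path (int v - 1) (frog_seq k) ds) = {0..<int w} \<and>
            even (last (frog_path (int v - 1) (frog_seq k) ds)))
       \<and> (\<forall>p::int. 0 \<le> p \<and> p < int w \<and> even p \<longrightarrow>
            (\<exists>ds. valid_exec w {} (int v - 1) (frog_seq k) ds \<and>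
                  last (frog_path (int v - 1) (frog_seq k) ds) = p))"
proof -
  define j where "j = k - 1"
  have kj: "k = Suc j" using assms(1) by (simp add: j_def)
  have seq: "frog_seq k = S j" by (simp add: frog_seq_def S_def kj)
  have vj: "int v - 1 = 0 + 2^j - 1" using assms(3) by (simp add: j_def)
  have wj: "int w = 2*2^j - 1" using assms(2) kj by (simp add: of_nat_diff)
  define W0 :: "int set" where "W0 = {0..0+2*2^j-2} - {0+2^j-1}"
  have W0': "W0 = {0..<int w} - {int v - 1}" unfolding W0_def wj vj by auto
  have sW: "int v - 1 \<notin> W0" by (simp add: W0')
  have sin: "int v - 1 \<in> {0..<int w}" unfolding wj vj by simp
  have F: "(\<forall>ds W' q. run W0 (int v - 1) (S j) ds = Some (W', q) \<longrightarrow> W' = {} \<and> even (q - 0))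
   \<and> (\<forall>p. 0 \<le> p \<and> p \<le> 0+2*2^j-2 \<and> even (p - 0) \<longrightarrow>
        (\<exists>ds. run W0 (int v - 1) (S j) ds = Some ({}, p)))"
    unfolding W0_def vj by (rule full)
  show ?thesis unfolding seq
  proof (rule conjI; intro allI impI)
    fix ds assume V: "valid_exec w {} (int v - 1) (S j) ds"
    let ?P = "frog_path (int v - 1) (S j) ds"
    obtain t where e: "?P = (int v - 1) # t" using fp_hd by blast
    from V have "length ds = length (S j) \<and> set (tl ?P) \<subseteq> W0 \<and> distinct ?P"
      unfolding valid_exec_def W0' using e by auto
    with run_link[OF sW] have "run W0 (int v - 1) (S j) ds \<noteq> None" by blast
    then obtain W' q where R: "run W0 (int v - 1) (S j) ds = Some (W', q)" by auto
    from F R have "W' = {}" "even q" by auto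
    with run_set[OF R sW] V sin show "distinct ?P \<and> set ?P = {0..<int w} \<and> even (last ?P)"
      unfolding valid_exec_def W0' by auto
  next
    fix p :: int assume p: "0 \<le> p \<and> p < int w \<and> even p"
    then have "0 \<le> p \<and> p \<le> 0+2*2^j-2 \<and> even (p - 0)" using wj by simp
    with F obtain ds where R: "run W0 (int v - 1) (S j) ds = Some ({}, p)" by blast
    let ?P = "frog_path (int v - 1) (S j) ds"
    from R run_link[OF sW] have L: "length ds = length (S j) \<and> set (tl ?P) \<subseteq> W0 \<and> distinct ?P" by auto
    from run_set[OF R sW] have "last ?P = p" by simp
    moreover have "valid_exec w {} (int v - 1) (S j) ds" using L unfolding valid_exec_def W0' by auto
    ultimately show "\<exists>ds. valid_exec w {} (int v - 1) (S j) ds \<and> last (frog_path (int v - 1) (S j) ds) = p" by blast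
  qed
qed

end
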